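(* Let $n\geqslant0$, $q=3^{2n+1}$, $A=\{\alpha-\alpha^{3^{n+1}}:\alpha\in\mathbb{F}_q\}$, and for $t\in\mathbb{F}_q$ let $tA=\{ta:a\in A\}$. Let $T\subseteq\mathbb{F}_q^\times$, $T^{-1}=\{t^{-1}:t\in T\}$, and let $\mathrm{span}_{\mathbb{F}_3}(T^{-1})$ be the $\mathbb{F}_3$-subspace of $\mathbb{F}_q$ spanned by $T^{-1}$. Then $$\bigcap_{t\in T}tA=\bigcap_{0\neq s\in\mathrm{span}_{\mathbb{F}_3}(T^{-1})}s^{-1}A.$$
   Context: $A$ is an $\mathbb{F}_3$-subspace of $\mathbb{F}_q$ (it equals the kernel of the trace map $\mathbb{F}_q\to\mathbb{F}_3$). An intersection over an empty index set is taken to be $\mathbb{F}_q$. *)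

theory Defs
  imports Main
begin

text \<open>F_3-linear span in a field of characteristic 3: the prime field is the image
  of the integers, so F_3-linear combinations are sums of integer multiples.\<close>
definition F3_span :: "'a::field set \<Rightarrow> 'a set" where
  "F3_span S = {(\<Sum>x\<in>F. of_int (c x) * x) | F c. finite F \<and> F \<subseteq> S}"

definition Aset :: "nat \<Rightarrow> 'a::field set" where
  "Aset n = {\<alpha> - \<alpha> ^ (3 ^ (n + 1)) | \<alpha>. True}"

definition dil :: "'a::field \<Rightarrow> 'a set \<Rightarrow> 'a set" where
  "dil t A = (\<lambda>a. t * a) ` A"

end

theory Submission
  imports Defs "HOL-Number_Theory.Residues"
begin

lemma frob_add:
  assumes "(3::'a::field) = 0"
  shows "((a::'a) + b) ^ (3 ^ k) = a ^ (3 ^ k) + b ^ (3 ^ k)"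
proof (induction k)
  case 0 then show ?case by simp
next
  case (Suc k)
  have cube: "(x + y) ^ 3 = x ^ 3 + y ^ 3" for x y :: 'a
  proof -
    have "(x + y) ^ 3 = x ^ 3 + y ^ 3 + 3 * (x^2*y + x*y^2)"
      by (simp add: power3_eq_cube power2_eq_square algebra_simps)
    then show ?thesis using assms by simp
  qed
  have "(a + b) ^ (3 ^ Suc k) = ((a + b) ^ (3 ^ k)) ^ 3"
    by (simp add: power_mult[symmetric] mult.commute)
  also have "\<dots> = (a ^ (3 ^ k)) ^ 3 + (b ^ (3 ^ k)) ^ 3" using Suc cube by simp
  also have "\<dots> = a ^ (3 ^ Suc k) + b ^ (3 ^ Suc k)"
    by (simp add: power_mult[symmetric] mult.commute)
  finally show ?case .
qed

lemma frob_neg: "(- (a::'a::field)) ^ (3 ^ k) = - (a ^ (3 ^ k))"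
  by (simp add: power_minus_odd)

lemma A_add:
  assumes "(3::'a::field) = 0" "x \<in> Aset n" "y \<in> Aset n"
  shows "x + y \<in> (Aset n :: 'a set)"
proof -
  from assms obtain a b where "x = a - a ^ (3^(n+1))" "y = b - b ^ (3^(n+1))"
    by (auto simp: Aset_def)
  then have "x + y = (a+b) - (a+b) ^ (3^(n+1))"
    using frob_add[OF assms(1), of a b "n+1"] by simp
  then show ?thesis by (auto simp: Aset_def)
qed

lemma A_neg:
  assumes "x \<in> (Aset n :: 'a::field set)"
  shows "- x \<in> Aset n"
proof -
  from assms obtain a where "x = a - a ^ (3^(n+1))"
    by (auto simp: Aset_def)
  then have "- x = (-a) - (-a) ^ (3^(n+1))"
    using frob_neg[of a "n+1"] by simp
  then show ?thesis unfolding Aset_def by blast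
qed

lemma A_zero: "0 \<in> (Aset n :: 'a::field set)"
  unfolding Aset_def by (auto intro!: exI[of _ 0])

lemma A_intmult:
  assumes "(3::'a::field) = 0" "x \<in> (Aset n :: 'a set)"
  shows "of_int c * x \<in> Aset n"
proof (induction c rule: int_induct[where k=0])
  case base then show ?case using A_zero by simp
next
  case (step1 i)
  have "of_int (i+1) * x = of_int i * x + x" by (simp add: algebra_simps)
  then show ?case using A_add[OF assms(1) step1(2) assms(2)] by simp
next
  case (step2 i)
  have "of_int (i-1) * x = of_int i * x + (- x)" by (simp add: algebra_simps)
  then show ?case using A_add[OF assms(1) step2(2) A_neg[OF assms(2)]] by simp
qed

lemma A_sum:
  assumes "(3::'a::field) = 0" "finite F" "\<And>s. s \<in> F \<Longrightarrow> s * x \<in> (Aset n :: 'a set)"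
  shows "(\<Sum>s\<in>F. of_int (c s) * s) * x \<in> Aset n"
  using assms(2,3)
proof (induction F rule: finite_induct)
  case empty then show ?case using A_zero by simp
next
  case (insert s F)
  have "(\<Sum>s\<in>insert s F. of_int (c s) * s) * x
        = of_int (c s) * (s * x) + (\<Sum>s\<in>F. of_int (c s) * s) * x"
    using insert(1,2) by (simp add: algebra_simps)
  then show ?case using A_add[OF assms(1) A_intmult[OF assms(1), of "s*x"]] insert by simp
qed

lemma char3:
  assumes "card (UNIV :: 'a::{field,finite} set) = 3 ^ (2 * n + 1)"
  shows "(3::'a) = 0"
proof -
  have "of_nat (card (UNIV :: 'a set)) = (0::'a)"
    using CHAR_dvd_CARD of_nat_eq_0_iff_char_dvd by blast
  then have "(3::'a) ^ (2*n+1) = 0" using assms by simp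
  then show ?thesis by (metis power_eq_0_iff)
qed

theorem lemma4p1:
  fixes n :: nat and T :: "'a::{field,finite} set"
  assumes "card (UNIV :: 'a set) = 3 ^ (2 * n + 1)"
    and "T \<subseteq> UNIV - {0}"
  shows "(\<Inter>t\<in>T. dil t (Aset n :: 'a set))
       = (\<Inter>s\<in>F3_span (inverse ` T) - {0}. dil (inverse s) (Aset n))"
proof -
  have c3: "(3::'a) = 0" using char3[OF assms(1)] .
  have mem: "x \<in> dil t A \<longleftrightarrow> inverse t * x \<in> A" if "t \<noteq> 0" for x t :: 'a and A
  proof
    assume "x \<in> dil t A"
    then obtain a where "a \<in> A" "x = t * a" by (auto simp: dil_def)
    then show "inverse t * x \<in> A" using that by (simp add: mult.assoc[symmetric])
  next
    assume "inverse t * x \<in> A"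
    moreover have "x = t * (inverse t * x)" using that by simp
    ultimately show "x \<in> dil t A" unfolding dil_def by blast
  qed
  show ?thesis
  proof (rule Set.set_eqI, rule iffI)
    fix x assume x: "x \<in> (\<Inter>t\<in>T. dil t (Aset n :: 'a set))"
    show "x \<in> (\<Inter>s\<in>F3_span (inverse ` T) - {0}. dil (inverse s) (Aset n))"
    proof (intro INT_I)
      fix s assume s: "s \<in> F3_span (inverse ` T) - {0}"
      then obtain F c where F: "finite F" "F \<subseteq> inverse ` T"
        and sdef: "s = (\<Sum>x\<in>F. of_int (c x) * x)" by (auto simp: F3_span_def)
      have "u * x \<in> Aset n" if uF: "u \<in> F" for u
      proof -
        obtain t where t: "t \<in> T" "u = inverse t" using F uF by auto
        then have "t \<noteq> 0" using assms(2) by auto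
        then show ?thesis using x t mem by auto
      qed
      then have "s * x \<in> Aset n" using A_sum[OF c3 F(1)] sdef by blast
      then show "x \<in> dil (inverse s) (Aset n)" using s mem[of "inverse s"] by simp
    qed
  next
    fix x assume x: "x \<in> (\<Inter>s\<in>F3_span (inverse ` T) - {0}. dil (inverse s) (Aset n :: 'a set))"
    show "x \<in> (\<Inter>t\<in>T. dil t (Aset n))"
    proof (intro INT_I)
      fix t assume t: "t \<in> T"
      then have t0: "t \<noteq> 0" using assms(2) by auto
      have "inverse t \<in> F3_span (inverse ` T)"
        unfolding F3_span_def
        by (rule CollectI, rule exI[of _ "{inverse t}"], rule exI[of _ "\<lambda>_. 1"]) (use t in auto)
      moreover have "inverse t \<noteq> 0" using t0 by simp
      ultimately have "x \<in> dil (inverse (inverse t)) (Aset n)" using x by blast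
      then show "x \<in> dil t (Aset n)" by simp
    qed
  qed
qed

end
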